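(* Let $\alpha\in(0,1)$, $\mathrm{g}\ge 0$, $\epsilon>0$, and consider the variable-step L1 finite-difference scheme described in the context. If the maximum time step size $\tau=\max_{1\le k\le N}\tau_k$ satisfies $$\tau \le \left(\frac{3}{\Gamma(2-\alpha)(4\mathrm{g}^2+3\epsilon)}\right)^{1/\alpha},$$ then for every $n$ with $1\le n\le N$, given $u^0,\dots,u^{n-1}\in\mathcal{V}_h$, the scheme at level $n$ has a unique solution $u^n\in\mathcal{V}_h$. That is, the numerical scheme is uniquely solvable.
   Context: Time grid: $0=t_0<t_1<\dots<t_N=T$, $\tau_k=t_k-t_{k-1}$, $\tau=\max_k\tau_k$, $\triangledown_\tau v^k=v^k-v^{k-1}$. Let $\omega_{\beta}(t)=t^{\beta-1}/\Gamma(\beta)$. The L1 kernels are $a^{(n)}_{n-k}=\frac{1}{\tau_k}\int_{t_{k-1}}^{t_k}\omega_{1-\alpha}(t_n-s)\,ds$ for $1\le k\le n$, and the L1 approximation of the Caputo derivative is $D^\alpha_\tau v^n=\sum_{k=1}^n a^{(n)}_{n-k}\triangledown_\tau v^k$. Space: $\Omega=(0,L)^2$, $h=L/M$, $x_i=ih$, $y_j=jh$. $\mathcal{V}_h$ is the set of grid functions on $\{(x_i,y_j):0\le i,j\le M\}$ that are $L$-periodic in each direction. $\delta_x^2v_{ij}=(v_{i+1,j}-2v_{ij}+v_{i-1,j})/h^2$, similarly $\delta_y^2$, and $\Delta_h=\delta_x^2+\delta_y^2$. Discrete inner product $\langle v,w\rangle=h^2\sum_{1\le i,j\le M-1}v_{ij}w_{ij}$,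 $\|v\|=\sqrt{\langle v,v\rangle}$. Let $f(u)=u^3-\mathrm{g}u^2-\epsilon u$ (the derivative of $F(u)=\frac14u^4-\frac{\mathrm g}{3}u^3-\frac{\epsilon}{2}u^2$). The scheme is: given $u^0_h=u_0(x_h)$, find $u^n\in\mathcal{V}_h$ with $$D^\alpha_\tau u^n_h=-\mu^n_h,\qquad \mu^n_h=(1+\Delta_h)^2u^n_h+f(u^n_h),\qquad 1\le n\le N,$$ at the grid points (with periodic boundary conditions). *)

theory Defs
  imports "HOL-Analysis.Analysis"
begin

text \<open>Grid functions are represented as functions on integer index pairs
  (i,j) \<mapsto> v i j (value at (x_i,y_j) = (i h, j h)), extended periodically.
  The space V_h of L-periodic grid functions is the set of M-periodic ones.\<close>

definition grid_periodic :: "nat \<Rightarrow> (int \<Rightarrow> int \<Rightarrow> real) \<Rightarrow> bool" where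
  "grid_periodic M v \<longleftrightarrow>
     (\<forall>i j. v (i + int M) j = v i j \<and> v i (j + int M) = v i j)"

definition delta_xx :: "real \<Rightarrow> (int \<Rightarrow> int \<Rightarrow> real) \<Rightarrow> int \<Rightarrow> int \<Rightarrow> real" where
  "delta_xx h v i j = (v (i + 1) j - 2 * v i j + v (i - 1) j) / h\<^sup>2"

definition delta_yy :: "real \<Rightarrow> (int \<Rightarrow> int \<Rightarrow> real) \<Rightarrow> int \<Rightarrow> int \<Rightarrow> real" where
  "delta_yy h v i j = (v i (j + 1) - 2 * v i j + v i (j - 1)) / h\<^sup>2"

definition lap_h :: "real \<Rightarrow> (int \<Rightarrow> int \<Rightarrow> real) \<Rightarrow> int \<Rightarrow> int \<Rightarrow> real" where
  "lap_h h v i j = delta_xx h v i j + delta_yy h v i j"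

definition one_plus_lap :: "real \<Rightarrow> (int \<Rightarrow> int \<Rightarrow> real) \<Rightarrow> int \<Rightarrow> int \<Rightarrow> real" where
  "one_plus_lap h v = (\<lambda>i j. v i j + lap_h h v i j)"

definition fnl :: "real \<Rightarrow> real \<Rightarrow> real \<Rightarrow> real" where
  "fnl g \<epsilon> u = u ^ 3 - g * u\<^sup>2 - \<epsilon> * u"

definition omega :: "real \<Rightarrow> real \<Rightarrow> real" where
  "omega \<beta> t = t powr (\<beta> - 1) / Gamma \<beta>"

definition l1_kernel :: "real \<Rightarrow> (nat \<Rightarrow> real) \<Rightarrow> nat \<Rightarrow> nat \<Rightarrow> real" where
  "l1_kernel \<alpha> t n k =
     (1 / (t k - t (k - 1))) * integral {t (k - 1) .. t k} (\<lambda>s. omega (1 - \<alpha>) (t n - s))"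

definition caputo_L1 :: "real \<Rightarrow> (nat \<Rightarrow> real) \<Rightarrow> nat \<Rightarrow> (nat \<Rightarrow> int \<Rightarrow> int \<Rightarrow> real)
    \<Rightarrow> int \<Rightarrow> int \<Rightarrow> real" where
  "caputo_L1 \<alpha> t n U i j = (\<Sum>k = 1..n. l1_kernel \<alpha> t n k * (U k i j - U (k - 1) i j))"

definition scheme_at :: "real \<Rightarrow> real \<Rightarrow> real \<Rightarrow> real \<Rightarrow> nat \<Rightarrow> (nat \<Rightarrow> real) \<Rightarrow> nat
    \<Rightarrow> (nat \<Rightarrow> int \<Rightarrow> int \<Rightarrow> real) \<Rightarrow> bool" where
  "scheme_at \<alpha> g \<epsilon> L M t n U \<longleftrightarrow>
     (\<forall>i\<in>{0..int M}. \<forall>j\<in>{0..int M}.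
        caputo_L1 \<alpha> t n U i j =
          - (one_plus_lap (L / real M) (one_plus_lap (L / real M) (U n)) i j + fnl g \<epsilon> (U n i j)))"

end

theory Submission
  imports Defs
begin


lemma kernel_int:
  fixes \<alpha> a b :: real
  assumes "0 < \<alpha>" "\<alpha> < 1" "a < b"
  shows "((\<lambda>s. (b - s) powr (-\<alpha>)) has_integral ((b - a) powr (1 - \<alpha>) / (1 - \<alpha>))) {a..b}"
proof -
  define F where "F = (\<lambda>s. (-1 / (1 - \<alpha>)) * (b - s) powr (1 - \<alpha>))"
  have c: "continuous_on {a..b} F"
    unfolding F_def using assms
    by (intro continuous_intros continuous_on_powr') auto
  have d: "(F has_vector_derivative (b - x) powr (-\<alpha>)) (at x)" if "x \<in> {a<..<b}" for x
  proof -
    have "((\<lambda>s. (b - s) powr (1 - \<alpha>)) has_real_derivative (1 - \<alpha>) * (b - x) powr (1 - \<alpha> - 1) * (-1)) (at x)"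
      using that by (auto intro!: derivative_eq_intros)
    from DERIV_cmult[OF this, of "-1 / (1 - \<alpha>)"]
    have "(F has_real_derivative (b - x) powr (-\<alpha>)) (at x)"
      unfolding F_def using assms by simp
    then show ?thesis by (simp add: has_real_derivative_iff_has_vector_derivative)
  qed
  have "((\<lambda>s. (b - s) powr (-\<alpha>)) has_integral (F b - F a)) {a..b}"
    by (rule fundamental_theorem_of_calculus_interior[OF _ c d]) (use assms in auto)
  moreover have "F b - F a = (b - a) powr (1 - \<alpha>) / (1 - \<alpha>)"
    unfolding F_def using assms by auto
  ultimately show ?thesis by simp
qed

lemma kernel_val:
  fixes \<alpha> a b :: real
  assumes "0 < \<alpha>" "\<alpha> < 1" "a < b"
  shows "(1 / (b - a)) * integral {a..b} (\<lambda>s. omega (1 - \<alpha>) (b - s)) = (b - a) powr (-\<alpha>) / Gamma (2 - \<alpha>)"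
proof -
  have "((\<lambda>s. omega (1 - \<alpha>) (b - s)) has_integral ((b - a) powr (1 - \<alpha>) / (1 - \<alpha>)) / Gamma (1 - \<alpha>)) {a..b}"
    unfolding omega_def using has_integral_divide[OF kernel_int[OF assms]] by simp
  then have i: "integral {a..b} (\<lambda>s. omega (1 - \<alpha>) (b - s)) = ((b - a) powr (1 - \<alpha>) / (1 - \<alpha>)) / Gamma (1 - \<alpha>)"
    by (rule integral_unique)
  have g: "Gamma (2 - \<alpha>) = (1 - \<alpha>) * Gamma (1 - \<alpha>)"
  proof -
    have "1 - \<alpha> \<notin> \<int>\<^sub>\<le>\<^sub>0" using assms by (auto elim!: nonpos_Ints_cases)
    from Gamma_plus1[OF this] show ?thesis by (simp add: algebra_simps)
  qed
  have "(b - a) powr (1 - \<alpha>) = (b - a) * (b - a) powr (-\<alpha>)"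
    using assms powr_add[of "b - a" 1 "-\<alpha>"] by simp
  moreover have "\<And>d P G. d > 0 \<Longrightarrow> G > 0 \<Longrightarrow> 1 / d * ((d * P / (1 - \<alpha>)) / G) = P / ((1 - \<alpha>) * G)"
    using assms by (simp add: field_simps)
  ultimately show ?thesis unfolding i g using assms Gamma_real_pos[of "1 - \<alpha>"] by simp
qed



definition tsum :: "nat \<Rightarrow> (int \<Rightarrow> int \<Rightarrow> real) \<Rightarrow> real" where
  "tsum M v = (\<Sum>i<M. \<Sum>j<M. v (int i) (int j))"

lemma per_shift_nat:
  assumes "\<forall>x. f (x + m) = f (x::int)"
  shows "f (x + int k * m) = f x"
proof (induction k arbitrary: x)
  case 0 then show ?case by simp
next
  case (Suc k)
  have "f (x + int (Suc k) * m) = f ((x + int k * m) + m)" by (simp add: algebra_simps)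
  also have "\<dots> = f (x + int k * m)" using assms by blast
  finally show ?case using Suc by simp
qed

lemma per_shift_int:
  assumes "\<forall>x. f (x + m) = f (x::int)"
  shows "f (x + k * m) = f x"
proof (cases "k \<ge> 0")
  case True then show ?thesis using per_shift_nat[OF assms, of x "nat k"] by simp
next
  case False
  have "f ((x + k * m) + int (nat (-k)) * m) = f (x + k * m)" by (rule per_shift_nat[OF assms])
  moreover have "int (nat (-k)) = -k" using False by simp
  ultimately have "f ((x + k * m) + (-k) * m) = f (x + k * m)" by metis
  then show ?thesis by (simp add: algebra_simps)
qed

lemma per_mod1:
  assumes "\<forall>x. f (x + m) = f (x::int)"
  shows "f x = f (x mod m)"
proof -
  have "f (x mod m + (x div m) * m) = f (x mod m)" by (rule per_shift_int[OF assms])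
  then show ?thesis by simp
qed

lemma per_mod:
  assumes "grid_periodic M v"
  shows "v i j = v (i mod int M) (j mod int M)"
proof -
  have "v i j = v (i mod int M) j"
    using per_mod1[of "\<lambda>x. v x j" "int M" i] assms unfolding grid_periodic_def by blast
  also have "\<dots> = v (i mod int M) (j mod int M)"
    using per_mod1[of "\<lambda>y. v (i mod int M) y" "int M" j] assms unfolding grid_periodic_def by blast
  finally show ?thesis .
qed

lemma shift1:
  fixes f :: "int \<Rightarrow> real"
  assumes "\<forall>x. f (x + int M) = f x"
  shows "(\<Sum>i<M. f (int i + 1)) = (\<Sum>i<M. f (int i))"
proof -
  have A: "(\<Sum>i<Suc M. f (int i)) = f (int 0) + (\<Sum>i<M. f (int (Suc i)))" by (rule sum.lessThan_Suc_shift[where g="\<lambda>i. f (int i)"])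
  have B: "(\<Sum>i<Suc M. f (int i)) = (\<Sum>i<M. f (int i)) + f (int M)" by (rule sum.lessThan_Suc)
  have C: "f (int M) = f (int 0)" using assms[rule_format, of 0] by simp
  have D: "(\<Sum>i<M. f (int (Suc i))) = (\<Sum>i<M. f (int i + 1))" by (simp add: add.commute)
  have E: "f (int 0) + (\<Sum>i<M. f (int (Suc i))) = (\<Sum>i<M. f (int i)) + f (int 0)"
    using trans[OF A[symmetric] B] unfolding C .
  have "(\<Sum>i<M. f (int (Suc i))) = (\<Sum>i<M. f (int i))"
    using add_right_imp_eq[of "\<Sum>i<M. f (int (Suc i))" "f (int 0)" "\<Sum>i<M. f (int i)"] E by (simp only: add.commute[of "f (int 0)"])
  then show ?thesis unfolding D .
qed

lemma tsum_shift_i: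
  assumes "\<forall>x j. F (x + int M) j = F x j"
  shows "tsum M (\<lambda>i j. F (i + 1) j) = tsum M F"
proof -
  have "tsum M (\<lambda>i j. F (i + 1) j) = (\<Sum>j<M. \<Sum>i<M. F (int i + 1) (int j))"
    unfolding tsum_def by (rule sum.swap)
  also have "\<dots> = (\<Sum>j<M. \<Sum>i<M. F (int i) (int j))"
    by (rule sum.cong[OF refl], rule shift1) (use assms in auto)
  also have "\<dots> = tsum M F" unfolding tsum_def by (rule sum.swap)
  finally show ?thesis .
qed

lemma tsum_shift_j:
  assumes "\<forall>i y. F i (y + int M) = F i y"
  shows "tsum M (\<lambda>i j. F i (j + 1)) = tsum M F"
  unfolding tsum_def
  by (rule sum.cong[OF refl], rule shift1) (use assms in auto)

lemma tsum_shift_i':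
  assumes "\<forall>x j. F (x + int M) j = F x j"
  shows "tsum M (\<lambda>i j. F (i - 1) j) = tsum M F"
proof -
  have pre: "\<forall>x j. F (x + int M - 1) j = F (x - 1) j"
  proof (intro allI)
    fix x j
    have e: "x + int M - 1 = (x - 1) + int M" by simp
    show "F (x + int M - 1) j = F (x - 1) j" unfolding e by (rule assms[rule_format])
  qed
  have "tsum M (\<lambda>i j. (\<lambda>x y. F (x - 1) y) (i + 1) j) = tsum M (\<lambda>i j. F (i - 1) j)"
    by (rule tsum_shift_i) (use pre in simp)
  then show ?thesis by simp
qed

lemma tsum_shift_j':
  assumes "\<forall>i y. F i (y + int M) = F i y"
  shows "tsum M (\<lambda>i j. F i (j - 1)) = tsum M F"
proof -
  have pre: "\<forall>i y. F i (y + int M - 1) = F i (y - 1)"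
  proof (intro allI)
    fix i y
    have e: "y + int M - 1 = (y - 1) + int M" by simp
    show "F i (y + int M - 1) = F i (y - 1)" unfolding e by (rule assms[rule_format])
  qed
  have "tsum M (\<lambda>i j. (\<lambda>x y. F x (y - 1)) i (j + 1)) = tsum M (\<lambda>i j. F i (j - 1))"
    by (rule tsum_shift_j) (use pre in simp)
  then show ?thesis by simp
qed

lemma tsum_add: "tsum M (\<lambda>i j. f i j + g i j) = tsum M f + tsum M g"
  unfolding tsum_def by (simp add: sum.distrib)
lemma tsum_diff: "tsum M (\<lambda>i j. f i j - g i j) = tsum M f - tsum M g"
  unfolding tsum_def by (simp add: sum_subtractf)
lemma tsum_cmult: "tsum M (\<lambda>i j. c * f i j) = c * tsum M f"
  unfolding tsum_def by (simp add: sum_distrib_left)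
lemma tsum_const: "tsum M (\<lambda>i j. c) = real M * real M * c"
  unfolding tsum_def by simp
lemma tsum_cong: "(\<And>i j. i < M \<Longrightarrow> j < M \<Longrightarrow> f (int i) (int j) = g (int i) (int j)) \<Longrightarrow> tsum M f = tsum M g"
  unfolding tsum_def by (auto intro!: sum.cong)
lemma tsum_nonneg: "(\<And>i j. i < M \<Longrightarrow> j < M \<Longrightarrow> 0 \<le> f (int i) (int j)) \<Longrightarrow> 0 \<le> tsum M f"
  unfolding tsum_def by (auto intro!: sum_nonneg)
lemma tsum_ge_term:
  assumes "\<And>i j. i < M \<Longrightarrow> j < M \<Longrightarrow> 0 \<le> f (int i) (int j)" "a < M" "c < M"
  shows "f (int a) (int c) \<le> tsum M f"
proof -
  have "f (int a) (int c) \<le> (\<Sum>j<M. f (int a) (int j))"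
    by (rule member_le_sum) (use assms in auto)
  also have "\<dots> \<le> tsum M f" unfolding tsum_def
    by (rule member_le_sum[where f = "\<lambda>i. \<Sum>j<M. f (int i) (int j)"]) (use assms in \<open>auto intro!: sum_nonneg\<close>)
  finally show ?thesis .
qed

lemma A_alt: "one_plus_lap h v i j = v i j + inverse (h\<^sup>2) * (v (i + 1) j - 2 * v i j + v (i - 1) j)
   + inverse (h\<^sup>2) * (v i (j + 1) - 2 * v i j + v i (j - 1))"
  unfolding one_plus_lap_def lap_h_def delta_xx_def delta_yy_def by (simp add: divide_inverse mult.commute)

lemma A_per:
  assumes "grid_periodic M v" shows "grid_periodic M (one_plus_lap h v)"
proof -
  have p: "v (x + int M) y = v x y" "v x (y + int M) = v x y" for x y
    using assms unfolding grid_periodic_def by auto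
  have a: "v (i + int M + 1) j = v (i + 1) j" "v (i + int M - 1) j = v (i - 1) j"
     "v i (j + int M + 1) = v i (j + 1)" "v i (j + int M - 1) = v i (j - 1)" for i j
    using p[of "i + 1" j] p[of "i - 1" j] p[of i "j + 1"] p[of i "j - 1"] by (simp_all add: algebra_simps)
  show ?thesis unfolding grid_periodic_def A_alt by (simp add: a p)
qed

lemma per_pm:
  assumes "grid_periodic M v"
  shows "v (x + int M) y = v x y" "v x (y + int M) = v x y"
    "v (x + int M + 1) y = v (x + 1) y" "v (x + int M - 1) y = v (x - 1) y"
    "v x (y + int M + 1) = v x (y + 1)" "v x (y + int M - 1) = v x (y - 1)"
proof -
  have p: "v (a + int M) c = v a c" "v a (c + int M) = v a c" for a c
    using assms unfolding grid_periodic_def by auto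
  show "v (x + int M) y = v x y" "v x (y + int M) = v x y" by (rule p)+
  have e: "x + int M + 1 = (x + 1) + int M" "x + int M - 1 = (x - 1) + int M"
     "y + int M + 1 = (y + 1) + int M" "y + int M - 1 = (y - 1) + int M" by simp_all
  show "v (x + int M + 1) y = v (x + 1) y" "v (x + int M - 1) y = v (x - 1) y"
    "v x (y + int M + 1) = v x (y + 1)" "v x (y + int M - 1) = v x (y - 1)"
    unfolding e by (rule p)+
qed

lemma SBP:
  assumes "grid_periodic M u" "grid_periodic M v"
  shows "tsum M (\<lambda>i j. u i j * one_plus_lap h v i j) = tsum M (\<lambda>i j. one_plus_lap h u i j * v i j)"
proof -
  have pu: "u (x + int M) y = u x y" "u x (y + int M) = u x y" for x y
    using assms unfolding grid_periodic_def by auto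
  have pv: "v (x + int M) y = v x y" "v x (y + int M) = v x y" for x y
    using assms unfolding grid_periodic_def by auto
  have s1: "tsum M (\<lambda>i j. u i j * v (i + 1) j) = tsum M (\<lambda>i j. u (i - 1) j * v i j)"
    using tsum_shift_i'[where M=M and F="\<lambda>i j. u i j * v (i + 1) j"] per_pm[OF assms(1)] per_pm[OF assms(2)] by simp
  have s2: "tsum M (\<lambda>i j. u i j * v (i - 1) j) = tsum M (\<lambda>i j. u (i + 1) j * v i j)"
    using tsum_shift_i[where M=M and F="\<lambda>i j. u i j * v (i - 1) j"] per_pm[OF assms(1)] per_pm[OF assms(2)] by simp
  have s3: "tsum M (\<lambda>i j. u i j * v i (j + 1)) = tsum M (\<lambda>i j. u i (j - 1) * v i j)"
    using tsum_shift_j'[where M=M and F="\<lambda>i j. u i j * v i (j + 1)"] per_pm[OF assms(1)] per_pm[OF assms(2)] by simp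
  have s4: "tsum M (\<lambda>i j. u i j * v i (j - 1)) = tsum M (\<lambda>i j. u i (j + 1) * v i j)"
    using tsum_shift_j[where M=M and F="\<lambda>i j. u i j * v i (j - 1)"] per_pm[OF assms(1)] per_pm[OF assms(2)] by simp
  define k where "k = inverse (h\<^sup>2)"
  have L: "tsum M (\<lambda>i j. u i j * one_plus_lap h v i j) = tsum M (\<lambda>i j. u i j * v i j)
     + k * (tsum M (\<lambda>i j. u i j * v (i + 1) j) - 2 * tsum M (\<lambda>i j. u i j * v i j) + tsum M (\<lambda>i j. u i j * v (i - 1) j))
     + k * (tsum M (\<lambda>i j. u i j * v i (j + 1)) - 2 * tsum M (\<lambda>i j. u i j * v i j) + tsum M (\<lambda>i j. u i j * v i (j - 1)))"
    unfolding A_alt k_def[symmetric] tsum_def by (simp add: algebra_simps sum.distrib sum_subtractf sum_distrib_left)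
  have R: "tsum M (\<lambda>i j. one_plus_lap h u i j * v i j) = tsum M (\<lambda>i j. u i j * v i j)
     + k * (tsum M (\<lambda>i j. u (i + 1) j * v i j) - 2 * tsum M (\<lambda>i j. u i j * v i j) + tsum M (\<lambda>i j. u (i - 1) j * v i j))
     + k * (tsum M (\<lambda>i j. u i (j + 1) * v i j) - 2 * tsum M (\<lambda>i j. u i j * v i j) + tsum M (\<lambda>i j. u i (j - 1) * v i j))"
    unfolding A_alt k_def[symmetric] tsum_def by (simp add: algebra_simps sum.distrib sum_subtractf sum_distrib_left)
  show ?thesis unfolding L R s1 s2 s3 s4 by (simp add: algebra_simps)
qed



definition phi :: "real \<Rightarrow> real \<Rightarrow> real \<Rightarrow> real" where
  "phi g d y = y ^ 3 - g * y\<^sup>2 + d * y"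
definition Phi :: "real \<Rightarrow> real \<Rightarrow> real \<Rightarrow> real" where
  "Phi g d y = y ^ 4 / 4 - g * y ^ 3 / 3 + d * y\<^sup>2 / 2"

lemma phi_mono:
  assumes "d \<ge> 4 * g\<^sup>2 / 3"
  shows "(phi g d x - phi g d y) * (x - y) \<ge> (x - y) ^ 4 / 4"
proof -
  define Q where "Q = x\<^sup>2 + x * y + y\<^sup>2 - g * (x + y) + d"
  have f: "phi g d x - phi g d y = (x - y) * Q"
    unfolding phi_def Q_def by (simp add: power2_eq_square power3_eq_cube algebra_simps)
  have e: "Q = (x - y)\<^sup>2 / 4 + 3 / 4 * (x + y - 2 * g / 3)\<^sup>2 + (d - g\<^sup>2 / 3)"
    unfolding Q_def by (simp add: power2_eq_square field_simps)
  have "d - g\<^sup>2 / 3 \<ge> 0" using assms by (simp add: power2_eq_square) (smt (verit) zero_le_square)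
  then have Q: "Q \<ge> (x - y)\<^sup>2 / 4" unfolding e by (simp add: add_nonneg_nonneg)
  have "(phi g d x - phi g d y) * (x - y) = (x - y)\<^sup>2 * Q" unfolding f by (simp add: power2_eq_square)
  also have "\<dots> \<ge> (x - y)\<^sup>2 * ((x - y)\<^sup>2 / 4)" by (rule mult_left_mono[OF Q]) simp
  finally show ?thesis by (simp add: power2_eq_square power4_eq_xxxx)
qed

lemma Phi_lower:
  assumes "d \<ge> 4 * g\<^sup>2 / 3"
  shows "Phi g d y \<ge> y ^ 4 / 12"
proof -
  have e: "Phi g d y - y ^ 4 / 12 = y\<^sup>2 * ((y - g)\<^sup>2 / 6 + g\<^sup>2 / 2) + (d / 2 - 2 * g\<^sup>2 / 3) * y\<^sup>2"
    unfolding Phi_def by (simp add: power2_eq_square power3_eq_cube power4_eq_xxxx field_simps)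
  have "0 \<le> y\<^sup>2 * ((y - g)\<^sup>2 / 6 + g\<^sup>2 / 2)" by simp
  moreover have "0 \<le> (d / 2 - 2 * g\<^sup>2 / 3) * y\<^sup>2" using assms by simp
  ultimately show ?thesis using e by linarith
qed

lemma quart_bound1:
  fixes B y :: real assumes "B \<ge> 0"
  shows "y ^ 4 / 12 - B * \<bar>y\<bar> \<ge> - (B * (12 * B + 1))"
proof (cases "\<bar>y\<bar> \<le> 12 * B + 1")
  case True
  then have "B * \<bar>y\<bar> \<le> B * (12 * B + 1)" using assms by (simp add: mult_left_mono)
  moreover have "y ^ 4 \<ge> 0" by simp
  ultimately show ?thesis by linarith
next
  case False
  then have y1: "\<bar>y\<bar> \<ge> 1" using assms by linarith
  have "\<bar>y\<bar> ^ 3 \<ge> \<bar>y\<bar>"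
  proof -
    have "\<bar>y\<bar> ^ 2 \<ge> 1" using one_le_power[OF y1, of 2] .
    then have "\<bar>y\<bar> * \<bar>y\<bar> ^ 2 \<ge> \<bar>y\<bar> * 1" by (rule mult_left_mono) simp
    then show ?thesis by (simp add: power3_eq_cube power2_eq_square)
  qed
  then have "\<bar>y\<bar> ^ 3 / 12 - B \<ge> 0" using False by linarith
  then have "\<bar>y\<bar> * (\<bar>y\<bar> ^ 3 / 12 - B) \<ge> 0" by simp
  moreover have "y ^ 4 / 12 - B * \<bar>y\<bar> = \<bar>y\<bar> * (\<bar>y\<bar> ^ 3 / 12 - B)"
    by (simp add: power4_eq_xxxx power3_eq_cube algebra_simps abs_mult_self_eq flip: abs_mult)
  moreover have "B * (12 * B + 1) \<ge> 0" using assms by simp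
  ultimately show ?thesis by linarith
qed

lemma quart_bound2:
  fixes B y :: real assumes "B \<ge> 0" "\<bar>y\<bar> \<ge> 12 * B + 1"
  shows "y ^ 4 / 12 - B * \<bar>y\<bar> \<ge> \<bar>y\<bar> / 12"
proof -
  have y1: "\<bar>y\<bar> \<ge> 1" using assms by linarith
  have "\<bar>y\<bar> ^ 3 \<ge> \<bar>y\<bar>"
  proof -
    have "\<bar>y\<bar> ^ 2 \<ge> 1" using one_le_power[OF y1, of 2] .
    then have "\<bar>y\<bar> * \<bar>y\<bar> ^ 2 \<ge> \<bar>y\<bar> * 1" by (rule mult_left_mono) simp
    then show ?thesis by (simp add: power3_eq_cube power2_eq_square)
  qed
  then have "\<bar>y\<bar> ^ 3 / 12 - B \<ge> 1 / 12" using assms by linarith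
  then have "\<bar>y\<bar> * (\<bar>y\<bar> ^ 3 / 12 - B) \<ge> \<bar>y\<bar> * (1 / 12)" by (rule mult_left_mono) simp
  moreover have "y ^ 4 / 12 - B * \<bar>y\<bar> = \<bar>y\<bar> * (\<bar>y\<bar> ^ 3 / 12 - B)"
    by (simp add: power4_eq_xxxx power3_eq_cube algebra_simps abs_mult_self_eq flip: abs_mult)
  ultimately show ?thesis by simp
qed

lemma poly_zero:
  fixes R Y Z W :: real
  assumes "\<And>s. 0 \<le> s * R + s\<^sup>2 * Y + s ^ 3 * Z + s ^ 4 * W"
  shows "R = 0"
proof -
  define P where "P = (\<lambda>s::real. R + s * Y + s\<^sup>2 * Z + s ^ 3 * W)"
  have sP: "s * R + s\<^sup>2 * Y + s ^ 3 * Z + s ^ 4 * W = s * P s" for s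
    unfolding P_def by (simp add: power2_eq_square power3_eq_cube power4_eq_xxxx algebra_simps)
  have "isCont P 0" unfolding P_def by (intro continuous_intros)
  then have c: "(P \<longlongrightarrow> P 0) (at 0)" by (simp add: isCont_def)
  have P0: "P 0 = R" unfolding P_def by simp
  have r: "(P \<longlongrightarrow> R) (at_right 0)" using c P0 by (simp add: filterlim_at_split)
  have l: "(P \<longlongrightarrow> R) (at_left 0)" using c P0 by (simp add: filterlim_at_split)
  have "0 \<le> R"
  proof (rule tendsto_lowerbound[OF r])
    show "eventually (\<lambda>s. 0 \<le> P s) (at_right 0)"
    proof (rule eventually_at_rightI[of 0 1])
      fix s :: real assume "s \<in> {0<..<1}"
      then have "s > 0" by simp
      moreover have "0 \<le> s * P s" using assms sP by metis
      ultimately show "0 \<le> P s" by (simp add: zero_le_mult_iff)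
    qed simp
  qed simp
  moreover have "R \<le> 0"
  proof (rule tendsto_upperbound[OF l])
    show "eventually (\<lambda>s. 0 \<ge> P s) (at_left 0)"
    proof (rule eventually_at_leftI[of "-1" 0])
      fix s :: real assume "s \<in> {-1<..<0}"
      then have "s < 0" by simp
      moreover have "0 \<le> s * P s" using assms sP by metis
      ultimately show "0 \<ge> P s" by (simp add: zero_le_mult_iff)
    qed simp
  qed simp
  ultimately show ?thesis by simp
qed



definition Jf :: "nat \<Rightarrow> real \<Rightarrow> real \<Rightarrow> real \<Rightarrow> (int \<Rightarrow> int \<Rightarrow> real) \<Rightarrow> (int \<Rightarrow> int \<Rightarrow> real) \<Rightarrow> real" where
  "Jf M h g d b w = tsum M (\<lambda>i j. Phi g d (w i j) - b i j * w i j + (one_plus_lap h w i j)\<^sup>2 / 2)"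

lemma A_lin: "one_plus_lap h (\<lambda>i j. w i j + s * e i j) i j = one_plus_lap h w i j + s * one_plus_lap h e i j"
  unfolding A_alt by (simp add: algebra_simps)

lemma A_diff: "one_plus_lap h (\<lambda>i j. w i j - v i j) i j = one_plus_lap h w i j - one_plus_lap h v i j"
  unfolding A_alt by (simp add: algebra_simps)

lemma A_zero: "one_plus_lap h (\<lambda>i j. 0) i j = 0"
  unfolding A_alt by simp

lemma torus_ext:
  assumes "0 < M" "grid_periodic M v1" "grid_periodic M v2"
    "\<And>a c. a < M \<Longrightarrow> c < M \<Longrightarrow> v1 (int a) (int c) = v2 (int a) (int c)"
  shows "v1 i j = v2 i j"
proof -
  define a where "a = nat (i mod int M)"
  define c where "c = nat (j mod int M)"
  have ia: "int a = i mod int M" "a < M" unfolding a_def using assms(1) by (auto simp: nat_less_iff)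
  have jc: "int c = j mod int M" "c < M" unfolding c_def using assms(1) by (auto simp: nat_less_iff)
  have "v1 i j = v1 (int a) (int c)" using per_mod[OF assms(2)] ia jc by simp
  also have "\<dots> = v2 (int a) (int c)" using assms(4) ia(2) jc(2) by blast
  also have "\<dots> = v2 i j" using per_mod[OF assms(3)] ia jc by simp
  finally show ?thesis .
qed

lemma tsum_poly:
  "tsum M (\<lambda>i j. a i j + s * b i j + s\<^sup>2 * c i j + s ^ 3 * e i j + s ^ 4 * f i j)
   = tsum M a + s * tsum M b + s\<^sup>2 * tsum M c + s ^ 3 * tsum M e + s ^ 4 * tsum M f"
  by (simp add: tsum_add tsum_cmult)

lemma variation:
  assumes "grid_periodic M w" "grid_periodic M e"
  shows "\<exists>Y Z W. \<forall>s. Jf M h g d b (\<lambda>i j. w i j + s * e i j) = Jf M h g d b w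
     + s * tsum M (\<lambda>i j. (phi g d (w i j) - b i j + one_plus_lap h (one_plus_lap h w) i j) * e i j)
     + s\<^sup>2 * Y + s ^ 3 * Z + s ^ 4 * W"
proof -
  define A where "A = one_plus_lap h"
  define P0 where "P0 = (\<lambda>i j. Phi g d (w i j) - b i j * w i j + (A w i j)\<^sup>2 / 2)"
  define P1 where "P1 = (\<lambda>i j. (phi g d (w i j) - b i j) * e i j + A w i j * A e i j)"
  define P2 where "P2 = (\<lambda>i j. (e i j)\<^sup>2 * (3 * (w i j)\<^sup>2 / 2 - g * w i j + d / 2) + (A e i j)\<^sup>2 / 2)"
  define P3 where "P3 = (\<lambda>i j. (e i j) ^ 3 * (w i j - g / 3))"
  define P4 where "P4 = (\<lambda>i j. (e i j) ^ 4 / 4)"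
  have pt: "Phi g d (w i j + s * e i j) - b i j * (w i j + s * e i j) + (A (\<lambda>i j. w i j + s * e i j) i j)\<^sup>2 / 2
     = P0 i j + s * P1 i j + s\<^sup>2 * P2 i j + s ^ 3 * P3 i j + s ^ 4 * P4 i j" for s i j
    unfolding A_def A_lin P0_def P1_def P2_def P3_def P4_def Phi_def phi_def
    by (simp add: power2_eq_square power3_eq_cube power4_eq_xxxx field_simps)
  have J: "Jf M h g d b (\<lambda>i j. w i j + s * e i j) = tsum M P0 + s * tsum M P1 + s\<^sup>2 * tsum M P2 + s ^ 3 * tsum M P3 + s ^ 4 * tsum M P4" for s
    unfolding Jf_def A_def[symmetric] pt by (rule tsum_poly)
  have J0: "Jf M h g d b w = tsum M P0" unfolding Jf_def P0_def A_def ..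
  have "tsum M P1 = tsum M (\<lambda>i j. (phi g d (w i j) - b i j) * e i j) + tsum M (\<lambda>i j. A w i j * A e i j)"
    unfolding P1_def by (rule tsum_add)
  also have "tsum M (\<lambda>i j. A w i j * A e i j) = tsum M (\<lambda>i j. A (A w) i j * e i j)"
    unfolding A_def by (rule SBP[OF A_per[OF assms(1)] assms(2)])
  also have "tsum M (\<lambda>i j. (phi g d (w i j) - b i j) * e i j) + tsum M (\<lambda>i j. A (A w) i j * e i j)
     = tsum M (\<lambda>i j. (phi g d (w i j) - b i j + A (A w) i j) * e i j)"
    by (simp add: tsum_add[symmetric] algebra_simps)
  finally have P1: "tsum M P1 = tsum M (\<lambda>i j. (phi g d (w i j) - b i j + A (A w) i j) * e i j)" .
  show ?thesis unfolding J J0 P1 A_def by blast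
qed

lemma coercive:
  assumes "d \<ge> 4 * g\<^sup>2 / 3"
  shows "\<exists>B\<ge>0. \<forall>w a c. a < M \<longrightarrow> c < M \<longrightarrow> \<bar>w (int a) (int c)\<bar> > B \<longrightarrow> Jf M h g d b w > 0"
proof -
  define Bb where "Bb = tsum M (\<lambda>i j. \<bar>b i j\<bar>)"
  have Bb0: "Bb \<ge> 0" unfolding Bb_def by (rule tsum_nonneg) simp
  have bB: "\<bar>b (int i) (int j)\<bar> \<le> Bb" if "i < M" "j < M" for i j
    unfolding Bb_def using that by (intro tsum_ge_term[where f = "\<lambda>i j. \<bar>b i j\<bar>"]) auto
  define K0 where "K0 = Bb * (12 * Bb + 1)"
  have K00: "K0 \<ge> 0" unfolding K0_def using Bb0 by simp
  define B where "B = 12 * Bb + 1 + 12 * (real M * real M * K0 + 1)"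
  have B0: "B \<ge> 0" unfolding B_def using Bb0 K00 by simp
  have main: "Jf M h g d b w > 0" if ac: "a < M" "c < M" "\<bar>w (int a) (int c)\<bar> > B" for w a c
  proof -
    define T where "T = (\<lambda>i j. Phi g d (w i j) - b i j * w i j + (one_plus_lap h w i j)\<^sup>2 / 2)"
    have Tl: "T (int i) (int j) \<ge> (w (int i) (int j)) ^ 4 / 12 - Bb * \<bar>w (int i) (int j)\<bar>" if "i < M" "j < M" for i j
    proof -
      have "- (b (int i) (int j) * w (int i) (int j)) \<ge> - (Bb * \<bar>w (int i) (int j)\<bar>)"
      proof -
        have "b (int i) (int j) * w (int i) (int j) \<le> \<bar>b (int i) (int j)\<bar> * \<bar>w (int i) (int j)\<bar>"
          by (metis abs_ge_self abs_mult)
        also have "\<dots> \<le> Bb * \<bar>w (int i) (int j)\<bar>" by (rule mult_right_mono[OF bB[OF that]]) simp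
        finally show ?thesis by simp
      qed
      moreover have "Phi g d (w (int i) (int j)) \<ge> (w (int i) (int j)) ^ 4 / 12" by (rule Phi_lower[OF assms])
      moreover have "(one_plus_lap h w (int i) (int j))\<^sup>2 / 2 \<ge> 0" by simp
      ultimately show ?thesis unfolding T_def by linarith
    qed
    have Tk: "T (int i) (int j) + K0 \<ge> 0" if "i < M" "j < M" for i j
      using Tl[OF that] quart_bound1[OF Bb0, of "w (int i) (int j)"] unfolding K0_def by linarith
    have "\<bar>w (int a) (int c)\<bar> \<ge> 12 * Bb + 1" using ac(3) K00 unfolding B_def
      by (smt (verit) mult_nonneg_nonneg of_nat_0_le_iff)
    from quart_bound2[OF Bb0 this] Tl[OF ac(1,2)]
    have "T (int a) (int c) \<ge> \<bar>w (int a) (int c)\<bar> / 12" by linarith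
    moreover have "\<bar>w (int a) (int c)\<bar> / 12 > real M * real M * K0 + 1"
    proof -
      have "12 * (real M * real M * K0 + 1) < \<bar>w (int a) (int c)\<bar>" using ac(3) Bb0 unfolding B_def by linarith
      then show ?thesis by simp
    qed
    ultimately have Ta: "T (int a) (int c) > real M * real M * K0 + 1" by linarith
    have "T (int a) (int c) + K0 \<le> tsum M (\<lambda>i j. T i j + K0)"
      by (rule tsum_ge_term[where f = "\<lambda>i j. T i j + K0"]) (use Tk ac in auto)
    also have "\<dots> = tsum M T + real M * real M * K0" by (simp add: tsum_add tsum_const)
    finally have "tsum M T > 0" using Ta K00 by linarith
    then show ?thesis unfolding Jf_def T_def .
  qed
  show ?thesis using B0 main by blast
qed



lemma uniq:
  assumes "0 < M" "d \<ge> 4 * g\<^sup>2 / 3" "grid_periodic M w1" "grid_periodic M w2"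
    and s1: "\<And>a c. a < M \<Longrightarrow> c < M \<Longrightarrow>
       phi g d (w1 (int a) (int c)) + one_plus_lap h (one_plus_lap h w1) (int a) (int c) = b (int a) (int c)"
    and s2: "\<And>a c. a < M \<Longrightarrow> c < M \<Longrightarrow>
       phi g d (w2 (int a) (int c)) + one_plus_lap h (one_plus_lap h w2) (int a) (int c) = b (int a) (int c)"
  shows "w1 = w2"
proof -
  define A where "A = one_plus_lap h"
  define e where "e = (\<lambda>i j. w1 i j - w2 i j)"
  have pe: "grid_periodic M e" using assms(3,4) unfolding e_def grid_periodic_def by simp
  have Ae: "A e = (\<lambda>i j. A w1 i j - A w2 i j)" unfolding e_def A_def by (rule ext, rule ext, rule A_diff)
  have AAe: "A (A e) i j = A (A w1) i j - A (A w2) i j" for i j unfolding A_def by (simp only: Ae[unfolded A_def]) (rule A_diff)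
  define F where "F = (\<lambda>i j. e i j * (phi g d (w1 i j) - phi g d (w2 i j)))"
  have "tsum M F + tsum M (\<lambda>i j. e i j * A (A e) i j) = tsum M (\<lambda>i j. F i j + e i j * A (A e) i j)"
    by (rule tsum_add[symmetric])
  also have "\<dots> = tsum M (\<lambda>i j. 0)"
  proof (rule tsum_cong)
    fix i j assume "i < M" "j < M"
    from s1[OF this] s2[OF this] have E: "phi g d (w1 (int i) (int j)) + A (A w1) (int i) (int j)
       = phi g d (w2 (int i) (int j)) + A (A w2) (int i) (int j)" unfolding A_def by simp
    have "F (int i) (int j) + e (int i) (int j) * A (A e) (int i) (int j)
      = e (int i) (int j) * ((phi g d (w1 (int i) (int j)) + A (A w1) (int i) (int j))
       - (phi g d (w2 (int i) (int j)) + A (A w2) (int i) (int j)))"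
      unfolding F_def AAe by (simp add: algebra_simps)
    then show "F (int i) (int j) + e (int i) (int j) * A (A e) (int i) (int j) = 0" unfolding E by simp
  qed
  finally have sum0: "tsum M F + tsum M (\<lambda>i j. e i j * A (A e) i j) = 0" by (simp add: tsum_const)
  have "tsum M (\<lambda>i j. e i j * A (A e) i j) = tsum M (\<lambda>i j. A e i j * A e i j)"
    unfolding A_def by (rule SBP[OF pe A_per[OF pe]])
  also have "\<dots> \<ge> 0" by (rule tsum_nonneg) simp
  finally have Fle: "tsum M F \<le> 0" using sum0 by linarith
  have Fge: "F (int i) (int j) \<ge> (e (int i) (int j)) ^ 4 / 4" for i j
    unfolding F_def e_def using phi_mono[OF assms(2), of "w1 (int i) (int j)" "w2 (int i) (int j)"]
    by (simp add: mult.commute)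
  have "w1 (int a) (int c) = w2 (int a) (int c)" if "a < M" "c < M" for a c
  proof -
    have "F (int a) (int c) \<le> tsum M F"
    proof (rule tsum_ge_term)
      fix i j assume "i < M" "j < M"
      have "(e (int i) (int j)) ^ 4 / 4 \<ge> 0" by simp
      then show "0 \<le> F (int i) (int j)" using Fge[of i j] by linarith
    qed (use that in auto)
    then have "(e (int a) (int c)) ^ 4 \<le> 0" using Fge[of a c] Fle by linarith
    then have "e (int a) (int c) = 0" by (simp add: power_le_zero_eq)
    then show ?thesis unfolding e_def by simp
  qed
  then show ?thesis using torus_ext[OF assms(1,3,4)] by blast
qed



lemma exist:
  assumes M0: "0 < M" and dg: "d \<ge> 4 * g\<^sup>2 / 3" and pb: "grid_periodic M b"
  shows "\<exists>w. grid_periodic M w \<and> (\<forall>i j. phi g d (w i j) + one_plus_lap h (one_plus_lap h w) i j = b i j)"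
proof -
  define ext :: "(int \<times> int \<Rightarrow> real) \<Rightarrow> int \<Rightarrow> int \<Rightarrow> real" where
    "ext x = (\<lambda>i j. x (i mod int M, j mod int M))" for x
  have pext: "grid_periodic M (ext x)" for x unfolding ext_def grid_periodic_def by simp
  have ext_small: "ext x (int a) (int c) = x (int a, int c)" if "a < M" "c < M" for x a c
    unfolding ext_def using that by (simp add: zmod_int)
  define E where "E x = Jf M h g d b (ext x)" for x
  have cont: "continuous_on UNIV E"
    unfolding E_def Jf_def tsum_def A_alt ext_def Phi_def
    by (intro continuous_intros continuous_on_product_coordinates) auto
  obtain B where B0: "B \<ge> 0" and B: "\<And>w a c. a < M \<Longrightarrow> c < M \<Longrightarrow> \<bar>w (int a) (int c)\<bar> > B \<Longrightarrow> Jf M h g d b w > 0"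
    using coercive[OF dg, of M h b] by blast
  define T where "T = {0..<int M} \<times> {0..<int M}"
  define S where "S q = (if q \<in> T then {-B..B} else {0::real})" for q
  define K where "K = PiE UNIV S"
  have "compactin (product_topology (\<lambda>_. euclidean) UNIV) K"
    unfolding K_def compactin_PiE S_def by auto
  then have cK: "compact K" unfolding euclidean_product_topology by simp
  have zK: "(\<lambda>_. 0) \<in> K" unfolding K_def S_def using B0 by auto
  obtain x0 where x0K: "x0 \<in> K" and x0min: "\<And>y. y \<in> K \<Longrightarrow> E x0 \<le> E y"
    using continuous_attains_inf[OF cK _ continuous_on_subset[OF cont]] zK by blast
  have E0: "E (\<lambda>_. 0) = 0" unfolding E_def Jf_def ext_def Phi_def
    by (simp add: A_zero tsum_const)
  have glob: "E x0 \<le> E y" for y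
  proof (cases "\<exists>a<M. \<exists>c<M. \<bar>y (int a, int c)\<bar> > B")
    case True
    then obtain a c where "a < M" "c < M" "\<bar>y (int a, int c)\<bar> > B" by blast
    then have "E y > 0" unfolding E_def using B[of a c "ext y"] ext_small by simp
    moreover have "E x0 \<le> 0" using x0min[OF zK] E0 by simp
    ultimately show ?thesis by simp
  next
    case False
    define y' where "y' = (\<lambda>q. if q \<in> T then y q else 0)"
    have "y' \<in> K" unfolding K_def S_def y'_def
    proof (simp add: PiE_iff, intro allI impI)
      fix a c assume "(a, c) \<in> T"
      then have "0 \<le> a" "a < int M" "0 \<le> c" "c < int M" unfolding T_def by auto
      then have "nat a < M" "nat c < M" "int (nat a) = a" "int (nat c) = c" by auto
      then have "\<bar>y (int (nat a), int (nat c))\<bar> \<le> B" using False by (meson not_less)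
      then have "\<bar>y (a, c)\<bar> \<le> B" using \<open>int (nat a) = a\<close> \<open>int (nat c) = c\<close> by simp
      then show "- B \<le> y (a, c) \<and> y (a, c) \<le> B" by linarith
    qed
    moreover have "ext y' = ext y" unfolding ext_def y'_def T_def using M0 by (intro ext) auto
    ultimately show ?thesis using x0min unfolding E_def by metis
  qed
  define w where "w = ext x0"
  have pw: "grid_periodic M w" unfolding w_def by (rule pext)
  define R where "R = (\<lambda>i j. phi g d (w i j) - b i j + one_plus_lap h (one_plus_lap h w) i j)"
  have pR: "grid_periodic M R"
    using pw pb A_per[OF A_per[OF pw]] unfolding R_def grid_periodic_def by simp
  have R0: "R (int a) (int c) = 0" if ac: "a < M" "c < M" for a c
  proof -
    define \<delta> where "\<delta> = (\<lambda>q. if q = (int a, int c) then 1 else (0::real))"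
    define e where "e = ext \<delta>"
    have pe: "grid_periodic M e" unfolding e_def by (rule pext)
    obtain Y Z W where var: "\<And>s. Jf M h g d b (\<lambda>i j. w i j + s * e i j) = Jf M h g d b w
       + s * tsum M (\<lambda>i j. R i j * e i j) + s\<^sup>2 * Y + s ^ 3 * Z + s ^ 4 * W"
      using variation[OF pw pe, of h g d b] unfolding R_def by blast
    have "0 \<le> s * tsum M (\<lambda>i j. R i j * e i j) + s\<^sup>2 * Y + s ^ 3 * Z + s ^ 4 * W" for s
    proof -
      have "ext (\<lambda>q. x0 q + s * \<delta> q) = (\<lambda>i j. w i j + s * e i j)"
        unfolding ext_def w_def e_def by simp
      then have "E (\<lambda>q. x0 q + s * \<delta> q) = Jf M h g d b (\<lambda>i j. w i j + s * e i j)" unfolding E_def by simp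
      moreover have "E x0 = Jf M h g d b w" unfolding E_def w_def ..
      ultimately show ?thesis using glob[of "\<lambda>q. x0 q + s * \<delta> q"] var[of s] by linarith
    qed
    then have z: "tsum M (\<lambda>i j. R i j * e i j) = 0" by (rule poly_zero)
    have "tsum M (\<lambda>i j. R i j * e i j) = (\<Sum>i<M. \<Sum>j<M. if i = a \<and> j = c then R (int i) (int j) else 0)"
      unfolding tsum_def
    proof (intro sum.cong refl)
      fix i j assume "i \<in> {..<M}" "j \<in> {..<M}"
      then have "e (int i) (int j) = (if i = a \<and> j = c then 1 else 0)"
        unfolding e_def \<delta>_def using ext_small by simp
      then show "R (int i) (int j) * e (int i) (int j) = (if i = a \<and> j = c then R (int i) (int j) else 0)" by simp
    qed
    also have "\<dots> = (\<Sum>i<M. if i = a then R (int i) (int c) else 0)"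
    proof (rule sum.cong[OF refl])
      fix i assume "i \<in> {..<M}"
      show "(\<Sum>j<M. if i = a \<and> j = c then R (int i) (int j) else 0) = (if i = a then R (int i) (int c) else 0)"
      proof (cases "i = a")
        case True
        then show ?thesis using ac by (simp add: sum.delta)
      next
        case False
        then show ?thesis by simp
      qed
    qed
    also have "\<dots> = R (int a) (int c)" using ac by (simp add: sum.delta)
    finally show ?thesis using z by simp
  qed
  have "R i j = (\<lambda>_ _. 0) i j" for i j
    by (rule torus_ext[OF M0 pR]) (auto simp: grid_periodic_def R0)
  then have "phi g d (w i j) - b i j + one_plus_lap h (one_plus_lap h w) i j = 0" for i j unfolding R_def by simp
  then have "phi g d (w i j) + one_plus_lap h (one_plus_lap h w) i j = b i j" for i j
    by (metis add_diff_cancel_left' diff_add_eq eq_iff_diff_eq_0)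
  then show ?thesis using pw by blast
qed



theorem theorem2p1:
  fixes \<alpha> g \<epsilon> L T :: real and N M :: nat and t :: "nat \<Rightarrow> real"
  assumes "0 < \<alpha>" "\<alpha> < 1" "0 \<le> g" "0 < \<epsilon>" "0 < L" "0 < M"
    and "t 0 = 0" "\<forall>k\<in>{1..N}. t (k - 1) < t k" "t N = T"
    and "Max ((\<lambda>k. t k - t (k - 1)) ` {1..N})
           \<le> (3 / (Gamma (2 - \<alpha>) * (4 * g\<^sup>2 + 3 * \<epsilon>))) powr (1 / \<alpha>)"
  shows "\<forall>n\<in>{1..N}. \<forall>U :: nat \<Rightarrow> int \<Rightarrow> int \<Rightarrow> real.
           (\<forall>k<n. grid_periodic M (U k)) \<longrightarrow>
           (\<exists>!w. grid_periodic M w \<and> scheme_at \<alpha> g \<epsilon> L M t n (U(n := w)))"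
proof (intro ballI allI impI)
  fix n U assume n: "n \<in> {1..N}" and pU: "\<forall>k<n. grid_periodic M (U k)"
  obtain m where nm: "n = Suc m" using n by (cases n) auto
  define \<tau> where "\<tau> = t n - t (n - 1)"
  have tpos: "t (n - 1) < t n" using assms(8) n by blast
  then have \<tau>0: "\<tau> > 0" unfolding \<tau>_def by simp
  define c where "c = l1_kernel \<alpha> t n n"
  have c_eq: "c = \<tau> powr (-\<alpha>) / Gamma (2 - \<alpha>)"
    unfolding c_def l1_kernel_def \<tau>_def using kernel_val[OF assms(1,2) tpos] by simp
  define C where "C = 3 / (Gamma (2 - \<alpha>) * (4 * g\<^sup>2 + 3 * \<epsilon>))"
  have G0: "Gamma (2 - \<alpha>) > 0" using assms(2) by simp
  have C0: "C > 0" unfolding C_def using G0 assms(4) by (simp add: add_nonneg_pos)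
  have "\<tau> \<le> Max ((\<lambda>k. t k - t (k - 1)) ` {1..N})"
    unfolding \<tau>_def using n by (intro Max_ge) auto
  then have \<tau>C: "\<tau> \<le> C powr (1 / \<alpha>)" using assms(10) unfolding C_def by linarith
  have "\<tau> powr \<alpha> \<le> (C powr (1 / \<alpha>)) powr \<alpha>"
    by (rule powr_mono2) (use assms(1) \<tau>0 \<tau>C in auto)
  also have "\<dots> = C" using assms(1) C0 by (simp add: powr_powr)
  finally have ta: "\<tau> powr \<alpha> \<le> C" .
  have tap: "\<tau> powr \<alpha> > 0" using \<tau>0 by simp
  have "c = 1 / (\<tau> powr \<alpha> * Gamma (2 - \<alpha>))" unfolding c_eq powr_minus_divide by simp
  also have "\<dots> \<ge> 1 / (C * Gamma (2 - \<alpha>))"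
    by (rule divide_left_mono) (use ta tap G0 C0 in \<open>auto intro: mult_right_mono mult_pos_pos\<close>)
  also have "1 / (C * Gamma (2 - \<alpha>)) = (4 * g\<^sup>2 + 3 * \<epsilon>) / 3"
    unfolding C_def using G0 assms(4) by (simp add: field_simps add_nonneg_pos)
  finally have cb: "c \<ge> (4 * g\<^sup>2 + 3 * \<epsilon>) / 3" .
  define d where "d = c - \<epsilon>"
  have dg: "d \<ge> 4 * g\<^sup>2 / 3" unfolding d_def using cb by simp
  define h where "h = L / real M"
  define S where "S i j = (\<Sum>k = 1..m. l1_kernel \<alpha> t n k * (U k i j - U (k - 1) i j))" for i j
  define b where "b i j = c * U m i j - S i j" for i j
  have pb: "grid_periodic M b"
  proof -
    have pk: "U k (i + int M) j = U k i j" "U k i (j + int M) = U k i j" if "k \<le> m" for k i j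
      using pU that nm unfolding grid_periodic_def by auto
    show ?thesis unfolding grid_periodic_def b_def S_def
      by (auto simp: pk intro!: sum.cong)
  qed
  have cap: "caputo_L1 \<alpha> t n (U(n := w)) i j = c * (w i j - U m i j) + S i j" for w i j
  proof -
    have "caputo_L1 \<alpha> t n (U(n := w)) i j
       = (\<Sum>k = 1..m. l1_kernel \<alpha> t n k * ((U(n := w)) k i j - (U(n := w)) (k - 1) i j))
         + l1_kernel \<alpha> t n (Suc m) * ((U(n := w)) (Suc m) i j - (U(n := w)) m i j)"
      unfolding caputo_L1_def nm by simp
    also have "(\<Sum>k = 1..m. l1_kernel \<alpha> t n k * ((U(n := w)) k i j - (U(n := w)) (k - 1) i j)) = S i j"
      unfolding S_def using nm by (intro sum.cong) auto
    finally show ?thesis unfolding c_def nm by (simp add: fun_upd_def add.commute)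
  qed
  have sch: "scheme_at \<alpha> g \<epsilon> L M t n (U(n := w)) \<longleftrightarrow>
     (\<forall>i\<in>{0..int M}. \<forall>j\<in>{0..int M}. phi g d (w i j) + one_plus_lap h (one_plus_lap h w) i j = b i j)" for w
    unfolding scheme_at_def cap h_def[symmetric] b_def phi_def fnl_def d_def
    by (simp add: algebra_simps)
  obtain w where pw: "grid_periodic M w" and sw: "\<forall>i j. phi g d (w i j) + one_plus_lap h (one_plus_lap h w) i j = b i j"
    using exist[OF assms(6) dg pb, of h] by blast
  show "\<exists>!w. grid_periodic M w \<and> scheme_at \<alpha> g \<epsilon> L M t n (U(n := w))"
  proof (rule ex1I[of _ w])
    show "grid_periodic M w \<and> scheme_at \<alpha> g \<epsilon> L M t n (U(n := w))" using pw sw sch by simp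
  next
    fix w' assume w': "grid_periodic M w' \<and> scheme_at \<alpha> g \<epsilon> L M t n (U(n := w'))"
    then have sw': "\<forall>i\<in>{0..int M}. \<forall>j\<in>{0..int M}. phi g d (w' i j) + one_plus_lap h (one_plus_lap h w') i j = b i j"
      using sch by blast
    show "w' = w"
    proof (rule uniq[OF assms(6) dg, where h = h and b = b])
      show "grid_periodic M w'" using w' by blast
      show "grid_periodic M w" by (rule pw)
      fix a c assume "a < M" "c < M"
      then show "phi g d (w' (int a) (int c)) + one_plus_lap h (one_plus_lap h w') (int a) (int c) = b (int a) (int c)"
        using sw' by auto
      show "phi g d (w (int a) (int c)) + one_plus_lap h (one_plus_lap h w) (int a) (int c) = b (int a) (int c)"
        using sw by blast
    qed
  qed
qed

end
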